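(* Let $p>0$, $q>0$, $\theta\ge 0$, and for $i=1,2$ let $R_i^{\max}>0$ and let $w_i,v_i,\psi_i$ be nonnegative functions, continuous on $[0,R_i^{\max})$ and $C^1$ on $(0,R_i^{\max})$, such that $$w_1'+\tfrac{\theta}{r}w_1\ge v_1^p,\quad v_1'\ge \psi_1,\quad \psi_1'+\tfrac{\theta}{r}\psi_1\ge w_1^q\quad\text{on }(0,R_1^{\max}),$$ $$w_2'+\tfrac{\theta}{r}w_2\le v_2^p,\quad v_2'\le \psi_2,\quad \psi_2'+\tfrac{\theta}{r}\psi_2\le w_2^q\quad\text{on }(0,R_2^{\max}),$$ with $w_i(0)=\mu_i\ge0$, $v_i(0)=m_i\ge0$, $\psi_i(0)=\nu_i\ge0$. If $\mu_1\ge\mu_2$, $m_1\ge m_2$, $\nu_1\ge\nu_2$ and $(\mu_1,m_1,\nu_1)\ne(\mu_2,m_2,\nu_2)$, then $$w_1(r)>w_2(r),\quad v_1(r)>v_2(r),\quad \psi_1(r)>\psi_2(r)\qquad\text{for all }0<r<\min\{R_1^{\max},R_2^{\max}\}.$$ *)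

theory Defs
  imports "HOL-Analysis.Analysis"
begin

definition admissible :: "real \<Rightarrow> (real \<Rightarrow> real) \<Rightarrow> bool" where
  "admissible R f \<longleftrightarrow>
     (\<forall>r\<in>{0..<R}. f r \<ge> 0) \<and>
     continuous_on {0..<R} f \<and>
     f differentiable_on {0<..<R} \<and>
     continuous_on {0<..<R} (deriv f)"

end

theory Submission
  imports Defs
begin

lemma lemA:
  fixes f f' :: "real \<Rightarrow> real" and \<theta> r :: real
  assumes th: "\<theta> \<ge> 0" and r: "0 < r" and cont: "continuous_on {0..r} f"
    and der: "\<And>x. 0 < x \<Longrightarrow> x < r \<Longrightarrow> (f has_real_derivative f' x) (at x)"
    and pos: "\<And>x. 0 < x \<Longrightarrow> x < r \<Longrightarrow> f' x + \<theta> / x * f x > 0"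
    and f0: "f 0 \<ge> 0"
  shows "f r > 0"
proof (rule ccontr)
  assume "\<not> f r > 0" hence fr: "f r \<le> 0" by simp
  define h where "h x = x powr \<theta> * f x" for x
  have mono: "h a < h b" if ab: "0 < a" "a < b" "b \<le> r" for a b
  proof (rule DERIV_pos_imp_increasing_open[OF \<open>a<b\<close>])
    fix x assume x: "a < x" "x < b"
    have "((\<lambda>x. x powr \<theta> * f x) has_real_derivative (\<theta> * x powr (\<theta> - 1) * f x + x powr \<theta> * f' x)) (at x)"
      using der[of x] x ab
      by (auto intro!: derivative_eq_intros has_real_derivative_powr)
    hence d: "(h has_real_derivative (\<theta> * x powr (\<theta> - 1) * f x + x powr \<theta> * f' x)) (at x)"
      unfolding h_def[abs_def] .
    have "\<theta> * x powr (\<theta> - 1) * f x + x powr \<theta> * f' x = x powr \<theta> * (f' x + \<theta> / x * f x)"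
      using x ab by (simp add: powr_diff field_simps)
    moreover have "x powr \<theta> * (f' x + \<theta> / x * f x) > 0" using pos[of x] x ab by simp
    ultimately show "\<exists>y. (h has_real_derivative y) (at x) \<and> 0 < y" using d by auto
  next
    have c1: "continuous_on {a..b} f" using continuous_on_subset[OF cont] ab by auto
    show "continuous_on {a..b} h" unfolding h_def[abs_def]
      using ab by (intro continuous_intros c1 continuous_on_powr') auto
  qed
  define s0 where "s0 = r/2"
  have s0: "0 < s0" "s0 < r" using r by (auto simp: s0_def)
  have "h r \<le> 0" unfolding h_def using fr by (simp add: mult_nonneg_nonpos)
  hence hs0: "h s0 < 0" using mono[of s0 r] s0 by auto
  have ps0: "s0 powr \<theta> > 0" using s0 by simp
  have fs0: "f s0 < 0" using hs0 ps0 unfolding h_def by (simp add: mult_less_0_iff)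
  have fs: "f s < f s0" if "0 < s" "s < s0" for s
  proof -
    have ps: "s powr \<theta> > 0" using that by simp
    have le: "s powr \<theta> \<le> s0 powr \<theta>" using that th by (intro powr_mono2) auto
    have "f s * s powr \<theta> < f s0 * s0 powr \<theta>" using mono[of s s0] that s0 unfolding h_def
      by (simp add: mult.commute)
    also have "\<dots> \<le> f s0 * s powr \<theta>" using fs0 le by (intro mult_left_mono_neg) auto
    finally show ?thesis using ps by simp
  qed
  obtain d where d: "d > 0" "\<forall>x'\<in>{0..r}. dist x' 0 < d \<longrightarrow> dist (f x') (f 0) < - f s0"
  proof -
    have "0 \<in> {0..r}" using r by simp
    moreover have "- f s0 > 0" using fs0 by simp
    ultimately show ?thesis using cont that unfolding continuous_on_iff by blast
  qed
  define s where "s = min (d/2) (s0/2)"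
  have s: "0 < s" "s < s0" "s < d" using d s0 by (auto simp: s_def)
  have "dist (f s) (f 0) < - f s0" using d s s0 by (auto simp: dist_real_def)
  hence "f 0 < f s - f s0" by (simp add: dist_real_def)
  with fs[OF s(1,2)] f0 show False by simp
qed

lemma lemC:
  fixes f f' g :: "real \<Rightarrow> real" and \<theta> r R :: real
  assumes "\<theta> \<ge> 0" "0 < r" "r < R" "continuous_on {0..<R} f"
    and "\<forall>x\<in>{0<..<R}. (f has_real_derivative f' x) (at x)"
    and "\<forall>x\<in>{0<..<r}. f' x + \<theta> / x * f x \<ge> g x"
    and "\<forall>x\<in>{0<..<r}. g x > 0" and "f 0 \<ge> 0"
  shows "f r > 0"
proof -
  have c: "continuous_on {0..r} f" using assms by (auto intro: continuous_on_subset)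
  have d: "(f has_real_derivative f' x) (at x)" if "0 < x" "x < r" for x
    using assms that by auto
  have p: "f' x + \<theta> / x * f x > 0" if "0 < x" "x < r" for x
  proof -
    have "f' x + \<theta> / x * f x \<ge> g x" "g x > 0" using assms that by auto
    thus ?thesis by linarith
  qed
  show ?thesis using lemA[of \<theta> r f f', OF _ _ c d p] assms by auto
qed

lemma lemD:
  fixes f :: "real \<Rightarrow> real"
  assumes "continuous_on {0..<R} f" "t \<in> {0..<R}" "f t > 0"
  shows "\<exists>e>0. \<forall>x\<in>{0..<R}. \<bar>x - t\<bar> < e \<longrightarrow> f x > 0"
proof -
  obtain d where "d > 0" "\<forall>x'\<in>{0..<R}. dist x' t < d \<longrightarrow> dist (f x') (f t) < f t"
    using assms unfolding continuous_on_iff by blast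
  note dd = this
  show ?thesis
  proof (intro exI[of _ d] conjI ballI impI)
    fix x assume x: "x \<in> {0..<R}" "\<bar>x - t\<bar> < d"
    have "dist x t < d" using x(2) by (simp add: dist_real_def)
    hence "\<bar>f x - f t\<bar> < f t" using dd(2) x(1) by (simp add: dist_real_def)
    thus "f x > 0" by linarith
  qed (use dd in simp)
qed

lemma adm_deriv:
  assumes "admissible R f" "x \<in> {0<..<R}"
  shows "(f has_real_derivative deriv f x) (at x)"
proof -
  have "f differentiable_on {0<..<R}" using assms(1) unfolding admissible_def by (elim conjE)
  hence "f differentiable (at x within {0<..<R})" using assms(2) unfolding differentiable_on_def by (rule bspec)
  hence "f differentiable (at x)" using at_within_open[OF assms(2) open_greaterThanLessThan] by simp
  thus ?thesis using DERIV_deriv_iff_real_differentiable by blast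
qed

lemma adm_cont:
  assumes "admissible R1 f" "admissible R2 g" 
  shows "continuous_on {0..<min R1 R2} (\<lambda>x. f x - g x)"
proof -
  have c: "continuous_on {0..<R1} f" "continuous_on {0..<R2} g"
    using assms unfolding admissible_def by simp_all
  have "{0..<min R1 R2} \<subseteq> {0..<R1}" "{0..<min R1 R2} \<subseteq> {0..<R2}" by auto
  hence "continuous_on {0..<min R1 R2} f" "continuous_on {0..<min R1 R2} g"
    using c continuous_on_subset by blast+
  thus ?thesis by (intro continuous_intros)
qed

lemma powr_diff_pos:
  fixes a b p :: real
  assumes "p > 0" "b \<ge> 0" "a > b"
  shows "a powr p - b powr p > 0"
  using powr_less_mono2[OF assms(1,2,3)] by simp

lemma chain:
  fixes A B :: "real \<Rightarrow> real"
  assumes "\<forall>x\<in>{0<..<\<delta>}. A x > 0" "\<delta> \<le> R"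
    and "\<And>r. 0 < r \<Longrightarrow> r < R \<Longrightarrow> \<forall>x\<in>{0<..<r}. A x > 0 \<Longrightarrow> B r > 0"
  shows "\<forall>x\<in>{0<..<\<delta>}. B x > 0"
proof
  fix x assume x: "x \<in> {0<..<\<delta>}"
  have "\<forall>y\<in>{0<..<x}. A y > 0" using assms(1) x by auto
  thus "B x > 0" using assms(3)[of x] assms(2) x by auto
qed

theorem lemma6p1:
  fixes p q \<theta> R1 R2 \<mu>1 \<mu>2 m1 m2 \<nu>1 \<nu>2 :: real
    and w1 v1 \<psi>1 w2 v2 \<psi>2 :: "real \<Rightarrow> real"
  assumes "p > 0" "q > 0" "\<theta> \<ge> 0" "R1 > 0" "R2 > 0"
    and "admissible R1 w1" "admissible R1 v1" "admissible R1 \<psi>1"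
    and "admissible R2 w2" "admissible R2 v2" "admissible R2 \<psi>2"
    and "\<forall>r\<in>{0<..<R1}. deriv w1 r + \<theta> / r * w1 r \<ge> v1 r powr p"
    and "\<forall>r\<in>{0<..<R1}. deriv v1 r \<ge> \<psi>1 r"
    and "\<forall>r\<in>{0<..<R1}. deriv \<psi>1 r + \<theta> / r * \<psi>1 r \<ge> w1 r powr q"
    and "\<forall>r\<in>{0<..<R2}. deriv w2 r + \<theta> / r * w2 r \<le> v2 r powr p"
    and "\<forall>r\<in>{0<..<R2}. deriv v2 r \<le> \<psi>2 r"
    and "\<forall>r\<in>{0<..<R2}. deriv \<psi>2 r + \<theta> / r * \<psi>2 r \<le> w2 r powr q"
    and "w1 0 = \<mu>1" "v1 0 = m1" "\<psi>1 0 = \<nu>1"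
    and "w2 0 = \<mu>2" "v2 0 = m2" "\<psi>2 0 = \<nu>2"
    and "\<mu>1 \<ge> 0" "m1 \<ge> 0" "\<nu>1 \<ge> 0" "\<mu>2 \<ge> 0" "m2 \<ge> 0" "\<nu>2 \<ge> 0"
    and "\<mu>1 \<ge> \<mu>2" "m1 \<ge> m2" "\<nu>1 \<ge> \<nu>2"
    and "(\<mu>1, m1, \<nu>1) \<noteq> (\<mu>2, m2, \<nu>2)"
  shows "\<forall>r\<in>{0<..<min R1 R2}. w1 r > w2 r \<and> v1 r > v2 r \<and> \<psi>1 r > \<psi>2 r"
proof -
  define R where "R = min R1 R2"
  define W where "W x = w1 x - w2 x" for x
  define V where "V x = v1 x - v2 x" for x
  define Q where "Q x = \<psi>1 x - \<psi>2 x" for x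
  have R: "R > 0" using assms(4,5) by (simp add: R_def)
  have sub: "x \<in> {0<..<R1}" "x \<in> {0<..<R2}" if "x \<in> {0<..<R}" for x
    using that by (auto simp: R_def)
  have nn: "w2 x \<ge> 0" "v2 x \<ge> 0" "\<psi>2 x \<ge> 0" if "x \<in> {0..<R}" for x
  proof -
    have "x \<in> {0..<R2}" using that by (auto simp: R_def)
    thus "w2 x \<ge> 0" "v2 x \<ge> 0" "\<psi>2 x \<ge> 0" using assms(9,10,11) unfolding admissible_def by blast+
  qed
  have cW: "continuous_on {0..<R} W" unfolding W_def[abs_def] R_def using adm_cont[OF assms(6,9)] .
  have cV: "continuous_on {0..<R} V" unfolding V_def[abs_def] R_def using adm_cont[OF assms(7,10)] .
  have cQ: "continuous_on {0..<R} Q" unfolding Q_def[abs_def] R_def using adm_cont[OF assms(8,11)] .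
  have dW: "\<forall>x\<in>{0<..<R}. (W has_real_derivative (deriv w1 x - deriv w2 x)) (at x)"
    unfolding W_def[abs_def] using sub adm_deriv[OF assms(6)] adm_deriv[OF assms(9)] by (blast intro: DERIV_diff)
  have dV: "\<forall>x\<in>{0<..<R}. (V has_real_derivative (deriv v1 x - deriv v2 x)) (at x)"
    unfolding V_def[abs_def] using sub adm_deriv[OF assms(7)] adm_deriv[OF assms(10)] by (blast intro: DERIV_diff)
  have dQ: "\<forall>x\<in>{0<..<R}. (Q has_real_derivative (deriv \<psi>1 x - deriv \<psi>2 x)) (at x)"
    unfolding Q_def[abs_def] using sub adm_deriv[OF assms(8)] adm_deriv[OF assms(11)] by (blast intro: DERIV_diff)
  have iW: "(deriv w1 x - deriv w2 x) + \<theta> / x * W x \<ge> v1 x powr p - v2 x powr p" if "x \<in> {0<..<R}" for x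
  proof -
    have "deriv w1 x + \<theta> / x * w1 x \<ge> v1 x powr p" "deriv w2 x + \<theta> / x * w2 x \<le> v2 x powr p"
      using assms(12,15) sub[OF that] by blast+
    moreover have "\<theta> / x * W x = \<theta> / x * w1 x - \<theta> / x * w2 x" unfolding W_def by (simp add: right_diff_distrib)
    ultimately show ?thesis by linarith
  qed
  have iV: "(deriv v1 x - deriv v2 x) + 0 / x * V x \<ge> Q x" if "x \<in> {0<..<R}" for x
  proof -
    have "deriv v1 x \<ge> \<psi>1 x" "deriv v2 x \<le> \<psi>2 x"
      using assms(13,16) sub[OF that] by blast+
    thus ?thesis unfolding Q_def by simp
  qed
  have iQ: "(deriv \<psi>1 x - deriv \<psi>2 x) + \<theta> / x * Q x \<ge> w1 x powr q - w2 x powr q" if "x \<in> {0<..<R}" for x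
  proof -
    have "deriv \<psi>1 x + \<theta> / x * \<psi>1 x \<ge> w1 x powr q" "deriv \<psi>2 x + \<theta> / x * \<psi>2 x \<le> w2 x powr q"
      using assms(14,17) sub[OF that] by blast+
    moreover have "\<theta> / x * Q x = \<theta> / x * \<psi>1 x - \<theta> / x * \<psi>2 x" unfolding Q_def by (simp add: right_diff_distrib)
    ultimately show ?thesis by linarith
  qed
  have W0: "W 0 \<ge> 0" "V 0 \<ge> 0" "Q 0 \<ge> 0" unfolding W_def V_def Q_def using assms(18-23,30-32) by auto
  have stepW: "W r > 0" if r: "0 < r" "r < R" and pos: "\<forall>x\<in>{0<..<r}. V x > 0" for r
  proof (rule lemC[of \<theta> r R W "\<lambda>x. deriv w1 x - deriv w2 x" "\<lambda>x. v1 x powr p - v2 x powr p"])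
    show "\<forall>x\<in>{0<..<r}. deriv w1 x - deriv w2 x + \<theta> / x * W x \<ge> v1 x powr p - v2 x powr p"
      using iW r by auto
    show "\<forall>x\<in>{0<..<r}. 0 < v1 x powr p - v2 x powr p"
    proof
      fix x assume x: "x \<in> {0<..<r}"
      have "v2 x \<ge> 0" using nn x r by auto
      moreover have "v1 x > v2 x" using pos x unfolding V_def by auto
      ultimately show "0 < v1 x powr p - v2 x powr p" using powr_diff_pos assms(1) by blast
    qed
  qed (use r assms(3) cW dW W0 in auto)
  have stepQ: "Q r > 0" if r: "0 < r" "r < R" and pos: "\<forall>x\<in>{0<..<r}. W x > 0" for r
  proof (rule lemC[of \<theta> r R Q "\<lambda>x. deriv \<psi>1 x - deriv \<psi>2 x" "\<lambda>x. w1 x powr q - w2 x powr q"])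
    show "\<forall>x\<in>{0<..<r}. deriv \<psi>1 x - deriv \<psi>2 x + \<theta> / x * Q x \<ge> w1 x powr q - w2 x powr q"
      using iQ r by auto
    show "\<forall>x\<in>{0<..<r}. 0 < w1 x powr q - w2 x powr q"
    proof
      fix x assume x: "x \<in> {0<..<r}"
      have "w2 x \<ge> 0" using nn x r by auto
      moreover have "w1 x > w2 x" using pos x unfolding W_def by auto
      ultimately show "0 < w1 x powr q - w2 x powr q" using powr_diff_pos assms(2) by blast
    qed
  qed (use r assms(3) cQ dQ W0 in auto)
  have stepV: "V r > 0" if r: "0 < r" "r < R" and pos: "\<forall>x\<in>{0<..<r}. Q x > 0" for r
  proof (rule lemC[of 0 r R V "\<lambda>x. deriv v1 x - deriv v2 x" Q])
    show "\<forall>x\<in>{0<..<r}. deriv v1 x - deriv v2 x + 0 / x * V x \<ge> Q x"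
      using iV r by auto
  qed (use r pos cV dV W0 in auto)
  define Pr where "Pr x \<longleftrightarrow> W x > 0 \<and> V x > 0 \<and> Q x > 0" for x
  have init: "\<exists>\<delta>>0. \<delta> \<le> R \<and> (\<forall>x\<in>{0<..<\<delta>}. Pr x)"
  proof -
    have "\<mu>1 > \<mu>2 \<or> m1 > m2 \<or> \<nu>1 > \<nu>2" using assms(30-33) by auto
    moreover have near: "\<exists>\<delta>>0. \<delta> \<le> R \<and> (\<forall>x\<in>{0<..<\<delta>}. F x > 0)"
      if cF: "continuous_on {0..<R} F" "F 0 > 0" for F :: "real \<Rightarrow> real"
    proof -
      obtain e where e: "e > 0" "\<forall>x\<in>{0..<R}. \<bar>x - 0\<bar> < e \<longrightarrow> F x > 0"
        using lemD[of R F 0] cF R by auto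
      show ?thesis
        by (rule exI[of _ "min e R"]) (use e R in auto)
    qed
    ultimately show ?thesis
    proof (elim disjE)
      assume "\<mu>1 > \<mu>2"
      hence "W 0 > 0" using assms(18,21) unfolding W_def by simp
      then obtain \<delta> where d: "\<delta> > 0" "\<delta> \<le> R" "\<forall>x\<in>{0<..<\<delta>}. W x > 0" using near[OF cW] by blast
      have q: "\<forall>x\<in>{0<..<\<delta>}. Q x > 0" using chain[OF d(3) d(2)] stepQ by blast
      have v: "\<forall>x\<in>{0<..<\<delta>}. V x > 0" using chain[OF q d(2)] stepV by blast
      show ?thesis using d q v unfolding Pr_def by blast
    next
      assume "m1 > m2"
      hence "V 0 > 0" using assms(19,22) unfolding V_def by simp
      then obtain \<delta> where d: "\<delta> > 0" "\<delta> \<le> R" "\<forall>x\<in>{0<..<\<delta>}. V x > 0" using near[OF cV] by blast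
      have w: "\<forall>x\<in>{0<..<\<delta>}. W x > 0" using chain[OF d(3) d(2)] stepW by blast
      have q: "\<forall>x\<in>{0<..<\<delta>}. Q x > 0" using chain[OF w d(2)] stepQ by blast
      show ?thesis using d q w unfolding Pr_def by blast
    next
      assume "\<nu>1 > \<nu>2"
      hence "Q 0 > 0" using assms(20,23) unfolding Q_def by simp
      then obtain \<delta> where d: "\<delta> > 0" "\<delta> \<le> R" "\<forall>x\<in>{0<..<\<delta>}. Q x > 0" using near[OF cQ] by blast
      have v: "\<forall>x\<in>{0<..<\<delta>}. V x > 0" using chain[OF d(3) d(2)] stepV by blast
      have w: "\<forall>x\<in>{0<..<\<delta>}. W x > 0" using chain[OF v d(2)] stepW by blast
      show ?thesis using d v w unfolding Pr_def by blast
    qed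
  qed
  then obtain \<delta> where \<delta>: "\<delta> > 0" "\<delta> \<le> R" "\<forall>x\<in>{0<..<\<delta>}. Pr x" by blast
  have main: "Pr r" if r: "0 < r" "r < R" for r
  proof (rule ccontr)
    assume nr: "\<not> Pr r"
    define S where "S = {x\<in>{0<..<R}. \<not> Pr x}"
    have rS: "r \<in> S" using r nr by (simp add: S_def)
    have Sne: "S \<noteq> {}" using rS by blast
    have bdd: "bdd_below S" unfolding S_def by (rule bdd_belowI[of _ 0]) auto
    define t where "t = Inf S"
    have tr: "t \<le> r" unfolding t_def using rS bdd by (rule cInf_lower)
    have dt: "\<delta> \<le> t" unfolding t_def
    proof (rule cInf_greatest[OF Sne])
      fix s assume s: "s \<in> S"
      show "\<delta> \<le> s"
      proof (rule ccontr)
        assume "\<not> \<delta> \<le> s"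
        hence "Pr s" using \<delta>(3) s by (auto simp: S_def)
        thus False using s by (simp add: S_def)
      qed
    qed
    have t0: "0 < t" "t < R" using dt \<delta>(1) tr r by auto
    have below: "Pr x" if "0 < x" "x < t" for x
    proof (rule ccontr)
      assume "\<not> Pr x"
      hence "x \<in> S" using that t0 by (simp add: S_def)
      hence "t \<le> x" unfolding t_def using bdd by (rule cInf_lower)
      thus False using that by simp
    qed
    have Wt: "W t > 0" using stepW[OF t0] below unfolding Pr_def by auto
    have Vt: "V t > 0" using stepV[OF t0] below unfolding Pr_def by auto
    have Qt: "Q t > 0" using stepQ[OF t0] below unfolding Pr_def by auto
    have tR: "t \<in> {0..<R}" using t0 by simp
    obtain e1 where e1: "e1 > 0" "\<forall>x\<in>{0..<R}. \<bar>x - t\<bar> < e1 \<longrightarrow> W x > 0" using lemD[OF cW tR Wt] by blast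
    obtain e2 where e2: "e2 > 0" "\<forall>x\<in>{0..<R}. \<bar>x - t\<bar> < e2 \<longrightarrow> V x > 0" using lemD[OF cV tR Vt] by blast
    obtain e3 where e3: "e3 > 0" "\<forall>x\<in>{0..<R}. \<bar>x - t\<bar> < e3 \<longrightarrow> Q x > 0" using lemD[OF cQ tR Qt] by blast
    define e where "e = min e1 (min e2 e3)"
    have "t < t + e" using e1 e2 e3 by (simp add: e_def)
    hence "\<exists>s\<in>S. s < t + e" unfolding t_def using cInf_less_iff[OF Sne bdd] by blast
    then obtain s where s: "s \<in> S" "s < t + e" by blast
    have "t \<le> s" unfolding t_def using s(1) bdd by (rule cInf_lower)
    hence "\<bar>s - t\<bar> < e" using s(2) by simp
    moreover have sR: "s \<in> {0..<R}" using s(1) by (auto simp: S_def)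
    ultimately have "Pr s" unfolding Pr_def using e1 e2 e3 by (auto simp: e_def)
    thus False using s(1) by (simp add: S_def)
  qed
  show ?thesis
  proof
    fix r assume "r \<in> {0<..<min R1 R2}"
    hence "Pr r" using main by (simp add: R_def)
    thus "w1 r > w2 r \<and> v1 r > v2 r \<and> \<psi>1 r > \<psi>2 r" unfolding Pr_def W_def V_def Q_def by simp
  qed
qed

end
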